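(* Let $d$ be a positive integer and let $A\in\mathbb{R}^{[3]\times[n]}$ be a matrix that does not have an elimination ordering. Then there exists $b\in\mathbb{R}^{[3]}$ such that the solution graph $G(R(A,b))$ is not connected.
   Context: Fix a positive integer $d$ and let $D=\{0,1,\dots,d\}$; $[n]=\{1,\dots,n\}$. For $A\in\mathbb{R}^{[m]\times[n]}$ and $b\in\mathbb{R}^{[m]}$, $R(A,b)=\{x\in D^{[n]} : Ax\ge b\}$. For $R\subseteq D^{[n]}$, the solution graph $G(R)$ is the undirected graph with vertex set $R$ in which $x,y$ are adjacent iff they differ in exactly one coordinate. A matrix $A=(a_{ij})$ with column index set $J$ can be eliminated at column $j\in J$ if (i) for every row $i$ with $a_{ij}>0$ we have $a_{ij'}=0$ for all $j'\in J\setminus\{j\}$, or (ii) for every row $i$ with $a_{ij}<0$ we have $a_{ij'}=0$ for all $j'\in J\setminus\{j\}$. For $J'\subseteq[n]$, $\mathrm{elm}(A,J')$ is the submatrix of $A$ obtained by deleting the columns indexed by $J'$. A sequence $(j_1,\dots,j_n)$ of the elements of $[n]$ is an elimination ordering (EO) of $A$ if for every $t\in[n]$ the matrix $\mathrm{elm}(A,\{j_1,\dots,j_{t-1}\})$ can be eliminated at column $j_t$. *)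

theory Defs
  imports Complex_Main "HOL-Library.FuncSet"
begin

text \<open>Matrices A in R^([m] x [n]) are functions nat => nat => real, entry A i j for
  row i in {1..m}, column j in {1..n}; values outside are irrelevant.
  Points of D^[n] are extensional functions {1..n} ->E {0..d}.\<close>

definition sol_set :: "nat \<Rightarrow> nat \<Rightarrow> nat \<Rightarrow> (nat \<Rightarrow> nat \<Rightarrow> real) \<Rightarrow> (nat \<Rightarrow> real) \<Rightarrow> (nat \<Rightarrow> nat) set" where
  "sol_set d m n A b = {x \<in> {1..n} \<rightarrow>\<^sub>E {0..d}.
      \<forall>i\<in>{1..m}. (\<Sum>j=1..n. A i j * real (x j)) \<ge> b i}"

definition sol_adj :: "nat \<Rightarrow> (nat \<Rightarrow> nat) set \<Rightarrow> (nat \<Rightarrow> nat) \<Rightarrow> (nat \<Rightarrow> nat) \<Rightarrow> bool" where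
  "sol_adj n R x y \<longleftrightarrow> x \<in> R \<and> y \<in> R \<and> card {j\<in>{1..n}. x j \<noteq> y j} = 1"

definition sol_graph_connected :: "nat \<Rightarrow> (nat \<Rightarrow> nat) set \<Rightarrow> bool" where
  "sol_graph_connected n R \<longleftrightarrow> (\<forall>x\<in>R. \<forall>y\<in>R. (sol_adj n R)\<^sup>*\<^sup>* x y)"

definition can_elim :: "nat \<Rightarrow> (nat \<Rightarrow> nat \<Rightarrow> real) \<Rightarrow> nat set \<Rightarrow> nat \<Rightarrow> bool" where
  "can_elim m A J j \<longleftrightarrow> j \<in> J \<and>
     ((\<forall>i\<in>{1..m}. A i j > 0 \<longrightarrow> (\<forall>j'\<in>J - {j}. A i j' = 0)) \<or>
      (\<forall>i\<in>{1..m}. A i j < 0 \<longrightarrow> (\<forall>j'\<in>J - {j}. A i j' = 0)))"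

text \<open>elm(A, J') keeps the columns {1..n} - J'.\<close>
definition elim_ordering :: "nat \<Rightarrow> nat \<Rightarrow> (nat \<Rightarrow> nat \<Rightarrow> real) \<Rightarrow> nat list \<Rightarrow> bool" where
  "elim_ordering m n A js \<longleftrightarrow> distinct js \<and> set js = {1..n} \<and>
     (\<forall>t<n. can_elim m A ({1..n} - set (take t js)) (js ! t))"

end

theory Submission
  imports Defs
begin

lemma adj_diff:
  assumes "sol_adj n R z z'"
  obtains j where "j \<in> {1..n}" "z j \<noteq> z' j" "\<forall>l\<in>{1..n}-{j}. z l = z' l"
proof -
  from assms have "card {j\<in>{1..n}. z j \<noteq> z' j} = 1" by (simp add: sol_adj_def)
  then obtain j where j: "{j\<in>{1..n}. z j \<noteq> z' j} = {j}" by (rule card_1_singletonE)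
  then have "j \<in> {1..n}" "z j \<noteq> z' j" by auto
  moreover have "\<forall>l\<in>{1..n}-{j}. z l = z' l" using j by blast
  ultimately show ?thesis using that by blast
qed

lemma cert:
  fixes d n :: nat and A :: "nat \<Rightarrow> nat \<Rightarrow> real" and x y :: "nat \<Rightarrow> nat" and T :: "nat set"
  assumes x: "x \<in> {1..n} \<rightarrow>\<^sub>E {0..d}" and y: "y \<in> {1..n} \<rightarrow>\<^sub>E {0..d}"
    and j0: "j0 \<in> T" "x j0 \<noteq> y j0"
    and blk: "\<And>j u. j \<in> T \<Longrightarrow> u \<in> {0..d} \<Longrightarrow> u \<noteq> x j \<Longrightarrow> \<exists>i\<in>{1..3}.
       A i j * (real u - real (x j)) < min 0 (\<Sum>l=1..n. A i l * (real (y l) - real (x l))) \<and>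
       (\<forall>l\<in>{1..n}-T. \<forall>z\<in>{0..d}. A i l * real z \<le> A i l * real (x l))"
  shows "\<exists>b. \<not> sol_graph_connected n (sol_set d 3 n A b)"
proof -
  define b where "b i = min (\<Sum>l=1..n. A i l * real (x l)) (\<Sum>l=1..n. A i l * real (y l))" for i
  let ?R = "sol_set d 3 n A b"
  have xR: "x \<in> ?R" unfolding sol_set_def b_def using x by auto
  have yR: "y \<in> ?R" unfolding sol_set_def b_def using y by auto
  have inv: "z \<in> ?R \<and> (\<forall>j\<in>T. z j = x j)" if "(sol_adj n ?R)\<^sup>*\<^sup>* x z" for z
    using that
  proof (induction rule: rtranclp_induct)
    case base then show ?case using xR by auto
  next
    case (step z z')
    from step.hyps(2) have z'R: "z' \<in> ?R" by (simp add: sol_adj_def)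
    obtain j where j: "j \<in> {1..n}" "z j \<noteq> z' j" "\<forall>l\<in>{1..n}-{j}. z l = z' l"
      using adj_diff step.hyps(2) by blast
    have zPi: "z \<in> {1..n} \<rightarrow>\<^sub>E {0..d}" and z'Pi: "z' \<in> {1..n} \<rightarrow>\<^sub>E {0..d}"
      using step.IH z'R by (auto simp: sol_set_def)
    have "j \<notin> T"
    proof
      assume jT: "j \<in> T"
      have u: "z' j \<in> {0..d}" "z' j \<noteq> x j" using z'Pi j step.IH jT by auto
      obtain i where i: "i \<in> {1..3}"
        and lt: "A i j * (real (z' j) - real (x j)) < min 0 (\<Sum>l=1..n. A i l * (real (y l) - real (x l)))"
        and nonT: "\<forall>l\<in>{1..n}-T. \<forall>z\<in>{0..d}. A i l * real z \<le> A i l * real (x l)"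
        using blk[OF jT u] by blast
      have "(\<Sum>l=1..n. A i l * real (z' l)) - (\<Sum>l=1..n. A i l * real (x l))
            = (\<Sum>l=1..n. A i l * (real (z' l) - real (x l)))"
        by (simp add: sum_subtractf right_diff_distrib)
      also have "\<dots> \<le> (\<Sum>l=1..n. if l = j then A i j * (real (z' j) - real (x j)) else 0)"
      proof (rule sum_mono)
        fix l assume l: "l \<in> {1..n}"
        show "A i l * (real (z' l) - real (x l)) \<le> (if l = j then A i j * (real (z' j) - real (x j)) else 0)"
        proof (cases "l = j")
          case False
          then have zl: "z' l = z l" using j l by auto
          show ?thesis
          proof (cases "l \<in> T")
            case True then show ?thesis using False zl step.IH by simp
          next
            case lT: False
            have "z l \<in> {0..d}" using zPi l by auto
            then have "A i l * real (z l) \<le> A i l * real (x l)" using nonT l lT by blast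
            then show ?thesis using False zl by (simp add: right_diff_distrib)
          qed
        qed simp
      qed
      also have "\<dots> = A i j * (real (z' j) - real (x j))" using j by simp
      finally have le: "(\<Sum>l=1..n. A i l * real (z' l)) \<le> (\<Sum>l=1..n. A i l * real (x l)) + A i j * (real (z' j) - real (x j))"
        by simp
      have "b i \<le> (\<Sum>l=1..n. A i l * real (z' l))" using z'R i by (simp add: sol_set_def)
      moreover have "(\<Sum>l=1..n. A i l * (real (y l) - real (x l))) = (\<Sum>l=1..n. A i l * real (y l)) - (\<Sum>l=1..n. A i l * real (x l))"
        by (simp add: sum_subtractf right_diff_distrib)
      ultimately show False using le lt by (auto simp: b_def min_def split: if_splits)
    qed
    moreover have "\<forall>l. l \<noteq> j \<longrightarrow> z l = z' l"
    proof (intro allI impI)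
      fix l assume "l \<noteq> j"
      show "z l = z' l"
      proof (cases "l \<in> {1..n}")
        case True then show ?thesis using j \<open>l \<noteq> j\<close> by auto
      next
        case False then show ?thesis using zPi z'Pi by (simp add: PiE_def extensional_def)
      qed
    qed
    ultimately show ?case using step.IH z'R by metis
  qed
  show ?thesis
  proof (intro exI notI)
    assume "sol_graph_connected n ?R"
    then have "(sol_adj n ?R)\<^sup>*\<^sup>* x y" using xR yR by (simp add: sol_graph_connected_def)
    then show False using inv j0 by auto
  qed
qed


lemma greedy:
  fixes K :: "nat set"
  assumes "finite K" and "\<forall>J\<subseteq>K. J \<noteq> {} \<longrightarrow> (\<exists>j\<in>J. can_elim m A J j)"
  shows "\<exists>js. distinct js \<and> set js = K \<and> (\<forall>t<card K. can_elim m A (K - set (take t js)) (js ! t))"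
  using assms
proof (induction "card K" arbitrary: K)
  case 0
  then have "K = {}" by simp
  then show ?case by (intro exI[of _ "[]"]) simp
next
  case (Suc c K)
  then have "K \<noteq> {}" by auto
  then obtain j where j: "j \<in> K" "can_elim m A K j" using Suc.prems by blast
  have "\<exists>js. distinct js \<and> set js = K - {j} \<and> (\<forall>t<card (K - {j}). can_elim m A (K - {j} - set (take t js)) (js ! t))"
  proof (rule Suc.hyps(1))
    show "c = card (K - {j})" using Suc.hyps(2) Suc.prems(1) j by simp
    show "finite (K - {j})" using Suc.prems(1) by simp
    show "\<forall>J\<subseteq>K - {j}. J \<noteq> {} \<longrightarrow> (\<exists>j\<in>J. can_elim m A J j)" using Suc.prems(2) by blast
  qed
  then obtain js where js: "distinct js" "set js = K - {j}"
    "\<forall>t<card (K - {j}). can_elim m A (K - {j} - set (take t js)) (js ! t)" by blast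
  show ?case
  proof (intro exI[of _ "j # js"] conjI allI impI)
    show "distinct (j # js)" using js by auto
    show "set (j # js) = K" using js j by auto
    fix t assume t: "t < card K"
    show "can_elim m A (K - set (take t (j # js))) ((j # js) ! t)"
    proof (cases t)
      case 0 then show ?thesis using j by simp
    next
      case (Suc t')
      have "t' < card (K - {j})" using t Suc j Suc.prems by auto
      then have "can_elim m A (K - {j} - set (take t' js)) (js ! t')" using js by blast
      moreover have "K - set (take t (j # js)) = K - {j} - set (take t' js)" using Suc by auto
      ultimately show ?thesis using Suc by simp
    qed
  qed
qed

lemma stuck_exists:
  assumes "\<not> (\<exists>js. elim_ordering m n A js)"
  shows "\<exists>J\<subseteq>{1..n}. J \<noteq> {} \<and> (\<forall>j\<in>J. \<not> can_elim m A J j)"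
proof (rule ccontr)
  assume "\<not> ?thesis"
  then have "\<forall>J\<subseteq>{1..n}. J \<noteq> {} \<longrightarrow> (\<exists>j\<in>J. can_elim m A J j)" by blast
  from greedy[OF _ this] obtain js where "distinct js \<and> set js = {1..n} \<and> (\<forall>t<card {1..n}. can_elim m A ({1..n} - set (take t js)) (js ! t))"
    by blast
  then have "elim_ordering m n A js" by (simp add: elim_ordering_def)
  then show False using assms by blast
qed


lemma sum_two:
  assumes "finite S" "j \<in> S" "k \<in> S" "j \<noteq> k" "\<forall>l\<in>S. l \<noteq> j \<and> l \<noteq> k \<longrightarrow> f l = 0"
  shows "sum f S = f j + f k"
proof -
  have "sum f S = sum f {j,k}"
    by (rule sum.mono_neutral_right) (use assms in auto)
  also have "\<dots> = f j + f k" using assms by simp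
  finally show ?thesis .
qed

lemma nonT1:
  fixes a :: real and z :: nat
  assumes "(a \<le> 0 \<and> xl = 0) \<or> (a \<ge> 0 \<and> xl = d)" "z \<le> d"
  shows "a * real z \<le> a * real xl"
  using assms by (auto simp: mult_left_mono mult_nonpos_nonneg)

lemma caseA:
  fixes d n :: nat and A :: "nat \<Rightarrow> nat \<Rightarrow> real"
  assumes d: "d > 0" and r: "r \<in> {1..3}" and s: "s \<in> {1..3}" and j: "j \<in> {1..n}" and k: "k \<in> {1..n}"
    and jk: "j \<noteq> k" and oj: "A r j * A s j < 0" and ok: "A r k * A s k < 0"
    and le: "\<bar>A r j\<bar> \<le> \<bar>A r k\<bar>"
  shows "\<exists>b. \<not> sol_graph_connected n (sol_set d 3 n A b)"
proof -
  define T where "T = {l\<in>{1..n}. A r l * A s l < 0}"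
  define x where "x l = (if l \<in> {1..n} then (if l \<in> T then (if l = k then (if A r l > 0 then 0 else d)
      else (if A r l < 0 then 0 else d)) else (if A r l \<le> 0 \<and> A s l \<le> 0 then 0 else d)) else undefined)" for l
  define y where "y l = (if l = j \<or> l = k then (if x l = 0 then 1 else d - 1) else x l)" for l
  have jT: "j \<in> T" and kT: "k \<in> T" using j k oj ok by (auto simp: T_def)
  have xPi: "x \<in> {1..n} \<rightarrow>\<^sub>E {0..d}" by (auto simp: x_def PiE_def extensional_def)
  have yPi: "y \<in> {1..n} \<rightarrow>\<^sub>E {0..d}" using xPi j k d by (auto simp: y_def PiE_def extensional_def)
  have xj: "x j = (if A r j < 0 then 0 else d)" using j jT jk by (simp add: x_def)
  have xk: "x k = (if A r k > 0 then 0 else d)" using k kT by (simp add: x_def)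
  have dl: "real (y l) - real (x l) = (if x l = 0 then 1 else -1)" if "l = j \<or> l = k" "x l = 0 \<or> x l = d" for l
    using that d by (auto simp: y_def of_nat_diff)
  have dj: "real (y j) - real (x j) = (if A r j < 0 then 1 else -1)" using dl[of j] xj d by auto
  have dk: "real (y k) - real (x k) = (if A r k > 0 then 1 else -1)" using dl[of k] xk d by auto
  have sumD: "(\<Sum>l=1..n. A i l * (real (y l) - real (x l))) =
      A i j * (real (y j) - real (x j)) + A i k * (real (y k) - real (x k))" for i
    by (rule sum_two) (use j k jk in \<open>auto simp: y_def\<close>)
  have rj: "A r j * (real (y j) - real (x j)) = - \<bar>A r j\<bar>" and sj: "A s j * (real (y j) - real (x j)) = \<bar>A s j\<bar>"
    using dj oj by (auto simp: mult_less_0_iff)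
  have rk: "A r k * (real (y k) - real (x k)) = \<bar>A r k\<bar>" and sk: "A s k * (real (y k) - real (x k)) = - \<bar>A s k\<bar>"
    using dk ok by (auto simp: mult_less_0_iff)
  have nonT: "\<forall>l\<in>{1..n}-T. \<forall>z\<in>{0..d}. A i l * real z \<le> A i l * real (x l)" if "i = r \<or> i = s" for i
  proof (intro ballI)
    fix l z assume l: "l \<in> {1..n}-T" and z: "z \<in> {0..d}"
    have "A r l * A s l \<ge> 0" using l by (auto simp: T_def)
    then have "(A r l \<le> 0 \<and> A s l \<le> 0 \<and> x l = 0) \<or> (A r l \<ge> 0 \<and> A s l \<ge> 0 \<and> x l = d)"
      using l by (auto simp: x_def zero_le_mult_iff)
    then have "(A i l \<le> 0 \<and> x l = 0) \<or> (A i l \<ge> 0 \<and> x l = d)" using that by auto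
    then show "A i l * real z \<le> A i l * real (x l)" using nonT1 z by auto
  qed
  show ?thesis
  proof (rule cert[OF xPi yPi jT])
    show "x j \<noteq> y j" using dj by (auto split: if_splits)
    fix j' u assume j': "j' \<in> T" and u: "u \<in> {0..d}" "u \<noteq> x j'"
    show "\<exists>i\<in>{1..3}. A i j' * (real u - real (x j')) < min 0 (\<Sum>l=1..n. A i l * (real (y l) - real (x l))) \<and>
       (\<forall>l\<in>{1..n}-T. \<forall>z\<in>{0..d}. A i l * real z \<le> A i l * real (x l))"
    proof (cases "j' = k")
      case jkk: True
      have "A s k * (real u - real (x k)) \<le> - \<bar>A s k\<bar>"
      proof (cases "A r k > 0")
        case True
        then have "A s k < 0" using ok by (auto simp: mult_less_0_iff)
        moreover have "real u \<ge> 1" using u xk True jkk by auto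
        ultimately show ?thesis using xk True by (simp add: mult_le_cancel_left)
      next
        case False
        then have "A s k > 0" "A r k < 0" using ok by (auto simp: mult_less_0_iff)
        moreover have "real u \<le> real d - 1" using u xk False jkk by auto
        ultimately have "A s k * (real u - real d) \<le> A s k * (-1)"
          by (intro mult_left_mono) auto
        then show ?thesis using xk False \<open>A s k > 0\<close> by simp
      qed
      moreover have "\<bar>A s j\<bar> > 0" using oj by auto
      moreover have "\<bar>A s k\<bar> > 0" using ok by auto
      ultimately have "A s k * (real u - real (x k)) < min 0 (\<Sum>l=1..n. A s l * (real (y l) - real (x l)))"
        using sumD[of s] sj sk by auto
      then show ?thesis using s nonT[of s] jkk by auto
    next
      case False
      have jn: "j' \<in> {1..n}" "A r j' * A s j' < 0" using j' by (auto simp: T_def)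
      have xj': "x j' = (if A r j' < 0 then 0 else d)" using jn j' False by (simp add: x_def)
      have "A r j' * (real u - real (x j')) < 0"
      proof (cases "A r j' < 0")
        case True
        then have "real u > 0" using u xj' by auto
        then show ?thesis using True xj' by (simp add: mult_neg_pos)
      next
        case False
        then have "A r j' > 0" using jn by (auto simp: mult_less_0_iff)
        moreover have "real u < real d" using u xj' False by auto
        ultimately show ?thesis using xj' False by (simp add: mult_pos_neg)
      qed
      moreover have "(\<Sum>l=1..n. A r l * (real (y l) - real (x l))) \<ge> 0"
        using sumD[of r] rj rk le by auto
      ultimately show ?thesis using r nonT[of r] by auto
    qed
  qed
qed


lemma sum_three:
  assumes "finite S" "a \<in> S" "b \<in> S" "c \<in> S" "a \<noteq> b" "a \<noteq> c" "b \<noteq> c"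
    "\<forall>l\<in>S. l \<notin> {a,b,c} \<longrightarrow> f l = 0"
  shows "sum f S = f a + f b + f c"
proof -
  have "sum f S = sum f {a,b,c}"
    by (rule sum.mono_neutral_right) (use assms in auto)
  also have "\<dots> = f a + f b + f c" using assms by (simp add: add.assoc)
  finally show ?thesis .
qed

lemma block1:
  fixes a :: real
  assumes "a \<noteq> 0" "xv = (if a < 0 then 0 else d)" "u \<le> d" "u \<noteq> xv"
  shows "a * (real u - real xv) \<le> - \<bar>a\<bar>"
proof (cases "a < 0")
  case True
  then have "real u \<ge> 1" using assms by auto
  then have "a * real u \<le> a * 1" using True by (intro mult_left_mono_neg) auto
  then show ?thesis using True assms by simp
next
  case False
  then have a: "a > 0" using assms by auto
  have "real u \<le> real d - 1" using assms False by auto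
  then have "a * (real u - real d) \<le> a * (-1)" using a by (intro mult_left_mono) auto
  then show ?thesis using a assms by simp
qed

lemma caseB:
  fixes d n :: nat and A :: "nat \<Rightarrow> nat \<Rightarrow> real"
  assumes d: "d > 0" and p: "p \<in> {1..3}" and q: "q \<in> {1..3}" and t: "t \<in> {1..3}"
    and al: "\<alpha> \<in> {1..n}" and be: "\<beta> \<in> {1..n}" and ga: "\<gamma> \<in> {1..n}"
    and a1: "A t \<alpha> = 0" and a2: "A p \<alpha> * A q \<alpha> < 0"
    and b1: "A p \<beta> = 0" and b2: "A q \<beta> * A t \<beta> < 0"
    and g1: "A q \<gamma> = 0" and g2: "A p \<gamma> * A t \<gamma> < 0"
    and nm: "\<forall>l\<in>{1..n}-{\<alpha>,\<beta>,\<gamma>}. (\<forall>i\<in>{1..3}. A i l \<ge> 0) \<or> (\<forall>i\<in>{1..3}. A i l \<le> 0)"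
  shows "\<exists>b. \<not> sol_graph_connected n (sol_set d 3 n A b)"
proof -
  have ab: "\<alpha> \<noteq> \<beta>" using a2 b1 by auto
  have ag: "\<alpha> \<noteq> \<gamma>" using a2 g1 by auto
  have bg: "\<beta> \<noteq> \<gamma>" using b2 g1 by auto
  define T where "T = {\<alpha>,\<beta>,\<gamma>}"
  define x where "x l = (if l \<in> {1..n} then
     (if l = \<alpha> then (if A p \<alpha> < 0 then 0 else d) else
      if l = \<beta> then (if A q \<beta> < 0 then 0 else d) else
      if l = \<gamma> then (if A t \<gamma> < 0 then 0 else d) else
      (if (\<forall>i\<in>{1..3}. A i l \<le> 0) then 0 else d)) else undefined)" for l
  define y where "y l = (if l \<in> T then (if x l = 0 then 1 else d - 1) else x l)" for l
  have xPi: "x \<in> {1..n} \<rightarrow>\<^sub>E {0..d}" by (auto simp: x_def PiE_def extensional_def)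
  have yPi: "y \<in> {1..n} \<rightarrow>\<^sub>E {0..d}" using xPi al be ga d by (auto simp: y_def T_def PiE_def extensional_def)
  have xa: "x \<alpha> = (if A p \<alpha> < 0 then 0 else d)" using al by (simp add: x_def)
  have xb: "x \<beta> = (if A q \<beta> < 0 then 0 else d)" using be ab by (simp add: x_def)
  have xg: "x \<gamma> = (if A t \<gamma> < 0 then 0 else d)" using ga ag bg by (simp add: x_def)
  have dl: "real (y l) - real (x l) = (if x l = 0 then 1 else -1)" if "l \<in> T" "x l = 0 \<or> x l = d" for l
    using that d by (auto simp: y_def of_nat_diff)
  have da: "real (y \<alpha>) - real (x \<alpha>) = (if A p \<alpha> < 0 then 1 else -1)" using dl[of \<alpha>] xa d by (auto simp: T_def)
  have db: "real (y \<beta>) - real (x \<beta>) = (if A q \<beta> < 0 then 1 else -1)" using dl[of \<beta>] xb d by (auto simp: T_def)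
  have dg: "real (y \<gamma>) - real (x \<gamma>) = (if A t \<gamma> < 0 then 1 else -1)" using dl[of \<gamma>] xg d by (auto simp: T_def)
  have sumD: "(\<Sum>l=1..n. A i l * (real (y l) - real (x l))) =
      A i \<alpha> * (real (y \<alpha>) - real (x \<alpha>)) + A i \<beta> * (real (y \<beta>) - real (x \<beta>)) + A i \<gamma> * (real (y \<gamma>) - real (x \<gamma>))" for i
    by (rule sum_three) (use al be ga ab ag bg in \<open>auto simp: y_def T_def\<close>)
  have pa: "A p \<alpha> * (real (y \<alpha>) - real (x \<alpha>)) = - \<bar>A p \<alpha>\<bar>" using da by auto
  have qa: "A q \<alpha> * (real (y \<alpha>) - real (x \<alpha>)) = \<bar>A q \<alpha>\<bar>" using da a2 by (auto simp: mult_less_0_iff)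
  have qb: "A q \<beta> * (real (y \<beta>) - real (x \<beta>)) = - \<bar>A q \<beta>\<bar>" using db by auto
  have tb: "A t \<beta> * (real (y \<beta>) - real (x \<beta>)) = \<bar>A t \<beta>\<bar>" using db b2 by (auto simp: mult_less_0_iff)
  have tg: "A t \<gamma> * (real (y \<gamma>) - real (x \<gamma>)) = - \<bar>A t \<gamma>\<bar>" using dg by auto
  have pg: "A p \<gamma> * (real (y \<gamma>) - real (x \<gamma>)) = \<bar>A p \<gamma>\<bar>" using dg g2 by (auto simp: mult_less_0_iff)
  have nonT: "\<forall>l\<in>{1..n}-T. \<forall>z\<in>{0..d}. A i l * real z \<le> A i l * real (x l)" if i: "i \<in> {1..3}" for i
  proof (intro ballI)
    fix l z assume l: "l \<in> {1..n}-T" and z: "z \<in> {0..d}"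
    have xl: "x l = (if (\<forall>i\<in>{1..3}. A i l \<le> 0) then 0 else d)" using l by (auto simp: x_def T_def)
    have "(\<forall>i\<in>{1..3}. A i l \<ge> 0) \<or> (\<forall>i\<in>{1..3}. A i l \<le> 0)" using nm l by (auto simp: T_def)
    then have "(A i l \<le> 0 \<and> x l = 0) \<or> (A i l \<ge> 0 \<and> x l = d)" using xl i by auto
    then show "A i l * real z \<le> A i l * real (x l)" using nonT1 z by auto
  qed
  show ?thesis
  proof (rule cert[OF xPi yPi])
    show "\<alpha> \<in> T" by (simp add: T_def)
    show "x \<alpha> \<noteq> y \<alpha>" using da by (auto split: if_splits)
    fix j' u assume j': "j' \<in> T" and u: "u \<in> {0..d}" "u \<noteq> x j'"
    show "\<exists>i\<in>{1..3}. A i j' * (real u - real (x j')) < min 0 (\<Sum>l=1..n. A i l * (real (y l) - real (x l))) \<and>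
       (\<forall>l\<in>{1..n}-T. \<forall>z\<in>{0..d}. A i l * real z \<le> A i l * real (x l))"
    proof -
      have nz: "A p \<alpha> \<noteq> 0" "A q \<alpha> \<noteq> 0" "A q \<beta> \<noteq> 0" "A t \<beta> \<noteq> 0" "A p \<gamma> \<noteq> 0" "A t \<gamma> \<noteq> 0"
        using a2 b2 g2 by auto
      consider "j' = \<alpha>" | "j' = \<beta>" | "j' = \<gamma>" using j' by (auto simp: T_def)
      then show ?thesis
      proof cases
        case 1
        have "A p \<alpha> * (real u - real (x \<alpha>)) \<le> - \<bar>A p \<alpha>\<bar>"
          by (rule block1[OF nz(1) xa]) (use u 1 in auto)
        then have "A p j' * (real u - real (x j')) < min 0 (\<Sum>l=1..n. A p l * (real (y l) - real (x l)))"
          using 1 sumD[of p] pa pg b1 nz by auto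
        then show ?thesis using p nonT[OF p] by auto
      next
        case 2
        have "A q \<beta> * (real u - real (x \<beta>)) \<le> - \<bar>A q \<beta>\<bar>"
          by (rule block1[OF nz(3) xb]) (use u 2 in auto)
        then have "A q j' * (real u - real (x j')) < min 0 (\<Sum>l=1..n. A q l * (real (y l) - real (x l)))"
          using 2 sumD[of q] qa qb g1 nz by auto
        then show ?thesis using q nonT[OF q] by auto
      next
        case 3
        have "A t \<gamma> * (real u - real (x \<gamma>)) \<le> - \<bar>A t \<gamma>\<bar>"
          by (rule block1[OF nz(6) xg]) (use u 3 in auto)
        then have "A t j' * (real u - real (x j')) < min 0 (\<Sum>l=1..n. A t l * (real (y l) - real (x l)))"
          using 3 sumD[of t] tb tg a1 nz by auto
        then show ?thesis using t nonT[OF t] by auto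
      qed
    qed
  qed
qed


lemma three_cover:
  fixes p q t i :: nat
  assumes "p \<in> {1..3}" "q \<in> {1..3}" "t \<in> {1..3}" "p \<noteq> q" "t \<noteq> p" "t \<noteq> q" "i \<in> {1..3}"
  shows "i = p \<or> i = q \<or> i = t"
  using assms by auto

lemma third_row:
  fixes p q :: nat
  assumes "p \<in> {1..3}" "q \<in> {1..3}" "p \<noteq> q"
  obtains t where "t \<in> {1..3}" "t \<noteq> p" "t \<noteq> q"
proof (rule that[of "6 - p - q"])
  show "6 - p - q \<in> {1..3}" using assms by auto
  show "6 - p - q \<noteq> p" using assms by simp presburger
  show "6 - p - q \<noteq> q" using assms by simp presburger
qed

lemma support2:
  fixes A :: "nat \<Rightarrow> nat \<Rightarrow> real"
  assumes cB: "\<And>r s j k. r\<in>{1..3} \<Longrightarrow> s\<in>{1..3} \<Longrightarrow> j\<in>S \<Longrightarrow> k\<in>S \<Longrightarrow> A r j * A s j < 0 \<Longrightarrow> A r k * A s k < 0 \<Longrightarrow> j = k"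
    and stk: "\<And>c. c \<in> J \<Longrightarrow> \<exists>p\<in>{1..3}. \<exists>q\<in>{1..3}. A p c > 0 \<and> A q c < 0 \<and> (\<exists>c1\<in>J-{c}. A p c1 \<noteq> 0) \<and> (\<exists>c2\<in>J-{c}. A q c2 \<noteq> 0)"
    and JS: "J \<subseteq> S" and c: "c \<in> J" and p: "p \<in> {1..3}" and q: "q \<in> {1..3}" and t: "t \<in> {1..3}"
    and pc: "A p c > 0" and qc: "A q c < 0"
    and c1: "c1 \<in> J" "c1 \<noteq> c" "A p c1 \<noteq> 0" and c2: "c2 \<in> J" "c2 \<noteq> c" "A q c2 \<noteq> 0"
    and tp: "t \<noteq> p" and tq: "t \<noteq> q"
  shows "A t c = 0"
proof (rule ccontr)
  assume tc: "A t c \<noteq> 0"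
  have pq: "p \<noteq> q" using pc qc by auto
  have cov: "\<And>i. i \<in> {1..3} \<Longrightarrow> i = p \<or> i = q \<or> i = t" using three_cover p q t pq tp tq by blast
  have cS: "c \<in> S" "c1 \<in> S" "c2 \<in> S" using JS c c1 c2 by auto
  have opp: "\<And>a b. a * b < 0 \<longleftrightarrow> (a > 0 \<and> b < 0) \<or> (a < 0 \<and> b > (0::real))" by (auto simp: mult_less_0_iff)
  show False
  proof (cases "A t c > 0")
    case True
    obtain p2 q2 where p2: "p2 \<in> {1..3}" "A p2 c2 > 0" and q2: "q2 \<in> {1..3}" "A q2 c2 < 0"
      using stk[OF c2(1)] by blast
    have cqp: "A q c * A p c < 0" "A q c * A t c < 0" using pc qc True opp by auto
    show False
    proof (cases "A q c2 > 0")
      case True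
      have "q2 = p \<or> q2 = t" using cov[OF q2(1)] q2 True by auto
      then show False
      proof
        assume "q2 = p"
        then have "A q c2 * A p c2 < 0" using True q2 opp by auto
        then show False using cB[OF q p cS(3) cS(1) _ cqp(1)] c2 by blast
      next
        assume "q2 = t"
        then have "A q c2 * A t c2 < 0" using True q2 opp by auto
        then show False using cB[OF q t cS(3) cS(1) _ cqp(2)] c2 by blast
      qed
    next
      case False
      then have neg: "A q c2 < 0" using c2 by auto
      have "p2 = p \<or> p2 = t" using cov[OF p2(1)] p2 neg by auto
      then show False
      proof
        assume "p2 = p"
        then have "A q c2 * A p c2 < 0" using neg p2 opp by auto
        then show False using cB[OF q p cS(3) cS(1) _ cqp(1)] c2 by blast
      next
        assume "p2 = t"
        then have "A q c2 * A t c2 < 0" using neg p2 opp by auto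
        then show False using cB[OF q t cS(3) cS(1) _ cqp(2)] c2 by blast
      qed
    qed
  next
    case False
    then have tneg: "A t c < 0" using tc by auto
    obtain p1 q1 where p1: "p1 \<in> {1..3}" "A p1 c1 > 0" and q1: "q1 \<in> {1..3}" "A q1 c1 < 0"
      using stk[OF c1(1)] by blast
    have cpq: "A p c * A q c < 0" "A p c * A t c < 0" using pc qc tneg opp by auto
    show False
    proof (cases "A p c1 > 0")
      case True
      have "q1 = q \<or> q1 = t" using cov[OF q1(1)] q1 True by auto
      then show False
      proof
        assume "q1 = q"
        then have "A p c1 * A q c1 < 0" using True q1 opp by auto
        then show False using cB[OF p q cS(2) cS(1) _ cpq(1)] c1 by blast
      next
        assume "q1 = t"
        then have "A p c1 * A t c1 < 0" using True q1 opp by auto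
        then show False using cB[OF p t cS(2) cS(1) _ cpq(2)] c1 by blast
      qed
    next
      case False
      then have neg: "A p c1 < 0" using c1 by auto
      have "p1 = q \<or> p1 = t" using cov[OF p1(1)] p1 neg by auto
      then show False
      proof
        assume "p1 = q"
        then have "A p c1 * A q c1 < 0" using neg p1 opp by auto
        then show False using cB[OF p q cS(2) cS(1) _ cpq(1)] c1 by blast
      next
        assume "p1 = t"
        then have "A p c1 * A t c1 < 0" using neg p1 opp by auto
        then show False using cB[OF p t cS(2) cS(1) _ cpq(2)] c1 by blast
      qed
    qed
  qed
qed

lemma support_pair:
  fixes A :: "nat \<Rightarrow> nat \<Rightarrow> real"
  assumes cB: "\<And>r s j k. r\<in>{1..3} \<Longrightarrow> s\<in>{1..3} \<Longrightarrow> j\<in>S \<Longrightarrow> k\<in>S \<Longrightarrow> A r j * A s j < 0 \<Longrightarrow> A r k * A s k < 0 \<Longrightarrow> j = k"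
    and a: "a \<in> {1..3}" and b: "b \<in> {1..3}" and e: "e \<in> {1..3}" and ab: "a \<noteq> b" and ea: "e \<noteq> a" and eb: "e \<noteq> b"
    and cab: "A a c * A b c < 0" and cS: "c \<in> S" "c' \<in> S" and cc: "c' \<noteq> c" and ac': "A a c' \<noteq> 0"
    and p': "p' \<in> {1..3}" "A p' c' > 0" and q': "q' \<in> {1..3}" "A q' c' < 0" and t': "t' \<in> {1..3}" "A t' c' = 0"
    and tp: "t' \<noteq> p'" and tq: "t' \<noteq> q'"
  shows "A b c' = 0 \<and> A a c' * A e c' < 0"
proof -
  have pq: "p' \<noteq> q'" using p' q' by auto
  have cov: "\<And>i. i \<in> {1..3} \<Longrightarrow> i = p' \<or> i = q' \<or> i = t'" using three_cover p'(1) q'(1) t'(1) pq tp tq by blast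
  have cov2: "\<And>i. i \<in> {1..3} \<Longrightarrow> i = a \<or> i = b \<or> i = e" using three_cover a b e ab ea eb by blast
  have opp: "\<And>u v. u * v < 0 \<longleftrightarrow> (u > 0 \<and> v < 0) \<or> (u < 0 \<and> v > (0::real))" by (auto simp: mult_less_0_iff)
  have "t' = b"
  proof -
    have "t' \<noteq> a" using ac' t' by auto
    moreover have "t' \<noteq> e"
    proof
      assume te: "t' = e"
      have "a = p' \<or> a = q'" using cov[OF a] \<open>t' \<noteq> a\<close> by auto
      moreover have "b = p' \<or> b = q'" using cov[OF b] te eb by auto
      ultimately have "A a c' * A b c' < 0" using ab p' q' opp by auto
      then show False using cB[OF a b cS(2) cS(1) _ cab] cc by blast
    qed
    ultimately show ?thesis using cov2[OF t'(1)] by auto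
  qed
  then have "A b c' = 0" using t' by simp
  moreover have "a = p' \<or> a = q'" using cov[OF a] \<open>t' = b\<close> ab by auto
  moreover have "e = p' \<or> e = q'" using cov[OF e] \<open>t' = b\<close> eb by auto
  ultimately show ?thesis using ea p' q' opp by auto
qed


theorem lemma7:
  fixes d n :: nat and A :: "nat \<Rightarrow> nat \<Rightarrow> real"
  assumes "d > 0"
    and "\<not> (\<exists>js. elim_ordering 3 n A js)"
  shows "\<exists>b :: nat \<Rightarrow> real. \<not> sol_graph_connected n (sol_set d 3 n A b)"
proof (cases "\<exists>r\<in>{1..3}. \<exists>s\<in>{1..3}. \<exists>j\<in>{1..n}. \<exists>k\<in>{1..n}. j \<noteq> k \<and> A r j * A s j < 0 \<and> A r k * A s k < 0")
  case True
  then obtain r s j k where rs: "r \<in> {1..3}" "s \<in> {1..3}" and jk: "j \<in> {1..n}" "k \<in> {1..n}" "j \<noteq> k"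
    and o: "A r j * A s j < 0" "A r k * A s k < 0" by blast
  show ?thesis
  proof (cases "\<bar>A r j\<bar> \<le> \<bar>A r k\<bar>")
    case True
    show ?thesis by (rule caseA[OF assms(1) rs jk o True])
  next
    case False
    then have "\<bar>A r k\<bar> \<le> \<bar>A r j\<bar>" by simp
    moreover have "k \<noteq> j" using jk by simp
    ultimately show ?thesis using caseA[OF assms(1) rs jk(2) jk(1) _ o(2) o(1)] by blast
  qed
next
  case False
  then have cB: "\<And>r s j k. r\<in>{1..3} \<Longrightarrow> s\<in>{1..3} \<Longrightarrow> j\<in>{1..n} \<Longrightarrow> k\<in>{1..n} \<Longrightarrow>
      A r j * A s j < 0 \<Longrightarrow> A r k * A s k < 0 \<Longrightarrow> j = k" by blast
  obtain J where J: "J \<subseteq> {1..n}" "J \<noteq> {}" "\<forall>j\<in>J. \<not> can_elim 3 A J j"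
    using stuck_exists[OF assms(2)] by blast
  have stk: "\<And>c. c \<in> J \<Longrightarrow> \<exists>p\<in>{1..3}. \<exists>q\<in>{1..3}. A p c > 0 \<and> A q c < 0 \<and>
      (\<exists>c1\<in>J-{c}. A p c1 \<noteq> 0) \<and> (\<exists>c2\<in>J-{c}. A q c2 \<noteq> 0)"
  proof -
    fix c assume c: "c \<in> J"
    then have "\<not> can_elim 3 A J c" using J by blast
    then show "?thesis c" using c unfolding can_elim_def by blast
  qed
  have opp: "\<And>u v. u * v < 0 \<longleftrightarrow> (u > 0 \<and> v < 0) \<or> (u < 0 \<and> v > (0::real))" by (auto simp: mult_less_0_iff)
  obtain c where c: "c \<in> J" using J by blast
  obtain p q c1 c2 where p: "p \<in> {1..3}" and q: "q \<in> {1..3}" and pc: "A p c > 0" and qc: "A q c < 0"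
    and c1: "c1 \<in> J" "c1 \<noteq> c" "A p c1 \<noteq> 0" and c2: "c2 \<in> J" "c2 \<noteq> c" "A q c2 \<noteq> 0"
    using stk[OF c] by blast
  have pq: "p \<noteq> q" using pc qc by auto
  obtain t where t: "t \<in> {1..3}" "t \<noteq> p" "t \<noteq> q" using third_row[OF p q pq] by blast
  have zt: "A t c = 0" by (rule support2[OF cB stk J(1) c p q t(1) pc qc c1 c2 t(2,3)])
  have gen: "\<exists>p'\<in>{1..3}. \<exists>q'\<in>{1..3}. \<exists>t'\<in>{1..3}. A p' c' > 0 \<and> A q' c' < 0 \<and> A t' c' = 0 \<and> t' \<noteq> p' \<and> t' \<noteq> q'"
    if c': "c' \<in> J" for c'
  proof -
    obtain p' q' e1 e2 where p': "p' \<in> {1..3}" and q': "q' \<in> {1..3}" and pc': "A p' c' > 0" and qc': "A q' c' < 0"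
      and e1: "e1 \<in> J" "e1 \<noteq> c'" "A p' e1 \<noteq> 0" and e2: "e2 \<in> J" "e2 \<noteq> c'" "A q' e2 \<noteq> 0"
      using stk[OF c'] by blast
    have "p' \<noteq> q'" using pc' qc' by auto
    then obtain t' where t': "t' \<in> {1..3}" "t' \<noteq> p'" "t' \<noteq> q'" using third_row[OF p' q'] by blast
    have "A t' c' = 0" by (rule support2[OF cB stk J(1) c' p' q' t'(1) pc' qc' e1 e2 t'(2,3)])
    then show ?thesis using p' q' t' pc' qc' by blast
  qed
  have cS: "c \<in> {1..n}" "c1 \<in> {1..n}" "c2 \<in> {1..n}" using J(1) c c1 c2 by auto
  have cpq: "A p c * A q c < 0" using pc qc opp by auto
  have cqp: "A q c * A p c < 0" using pc qc opp by auto
  obtain p1 q1 t1 where s1: "p1 \<in> {1..3}" "q1 \<in> {1..3}" "t1 \<in> {1..3}" "A p1 c1 > 0" "A q1 c1 < 0" "A t1 c1 = 0" "t1 \<noteq> p1" "t1 \<noteq> q1"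
    using gen[OF c1(1)] by blast
  have sc1: "A q c1 = 0 \<and> A p c1 * A t c1 < 0"
    by (rule support_pair[OF cB p q t(1) pq t(2) t(3) cpq cS(1) cS(2) c1(2) c1(3) s1(1) s1(4) s1(2) s1(5) s1(3) s1(6) s1(7) s1(8)])
  obtain p2 q2 t2 where s2: "p2 \<in> {1..3}" "q2 \<in> {1..3}" "t2 \<in> {1..3}" "A p2 c2 > 0" "A q2 c2 < 0" "A t2 c2 = 0" "t2 \<noteq> p2" "t2 \<noteq> q2"
    using gen[OF c2(1)] by blast
  have sc2: "A p c2 = 0 \<and> A q c2 * A t c2 < 0"
    by (rule support_pair[OF cB q p t(1) pq[symmetric] t(3) t(2) cqp cS(1) cS(3) c2(2) c2(3) s2(1) s2(4) s2(2) s2(5) s2(3) s2(6) s2(7) s2(8)])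
  have cov: "\<And>i. i \<in> {1..3} \<Longrightarrow> i = p \<or> i = q \<or> i = t" using three_cover p q t(1) pq t(2,3) by blast
  have c1pt: "A p c1 * A t c1 < 0" "A t c1 * A p c1 < 0" using sc1 by (auto simp: mult.commute)
  have c2qt: "A q c2 * A t c2 < 0" "A t c2 * A q c2 < 0" using sc2 by (auto simp: mult.commute)
  have nm: "\<forall>l\<in>{1..n}-{c,c2,c1}. (\<forall>i\<in>{1..3}. A i l \<ge> 0) \<or> (\<forall>i\<in>{1..3}. A i l \<le> 0)"
  proof (rule ballI, rule ccontr)
    fix l assume l: "l \<in> {1..n}-{c,c2,c1}" and nmx: "\<not> ((\<forall>i\<in>{1..3}. A i l \<ge> 0) \<or> (\<forall>i\<in>{1..3}. A i l \<le> 0))"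
    then obtain i i' where i: "i \<in> {1..3}" "A i l < 0" and i': "i' \<in> {1..3}" "A i' l > 0" by force
    have ol: "A i l * A i' l < 0" using i i' opp by auto
    have ln: "l \<in> {1..n}" using l by auto
    have "i \<noteq> i'" using i i' by auto
    then consider "i = p" "i' = q" | "i = q" "i' = p" | "i = p" "i' = t" | "i = t" "i' = p"
      | "i = q" "i' = t" | "i = t" "i' = q"
      using cov[OF i(1)] cov[OF i'(1)] by blast
    then show False
    proof cases
      case 1 then show False using cB[OF i(1) i'(1) ln cS(1) ol] cpq l by auto
    next
      case 2 then show False using cB[OF i(1) i'(1) ln cS(1) ol] cqp l by auto
    next
      case 3 then show False using cB[OF i(1) i'(1) ln cS(2) ol] c1pt l by auto
    next
      case 4 then show False using cB[OF i(1) i'(1) ln cS(2) ol] c1pt l by auto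
    next
      case 5 then show False using cB[OF i(1) i'(1) ln cS(3) ol] c2qt l by auto
    next
      case 6 then show False using cB[OF i(1) i'(1) ln cS(3) ol] c2qt l by auto
    qed
  qed
  show ?thesis
    by (rule caseB[OF assms(1) p q t(1) cS(1) cS(3) cS(2) zt cpq conjunct1[OF sc2] conjunct2[OF sc2]
          conjunct1[OF sc1] conjunct2[OF sc1] nm])
qed


end
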